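(* Assume the setting below, and let $\gamma=\sup_{W_1\in V_{1,H},W_2\in V_{2,H}}\frac{(T_1W_1,T_2W_2)}{\|T_1W_1\|\,\|T_2W_2\|}$ (with $\|\cdot\|$ the $L^2(\Omega)$ norm), assumed to lie in $(0,1)$. If $$\tau^2\le 2(1-\gamma^2)\inf_{W\in V_{2,H}}\frac{\|W\|_{m_{22}}^2}{\|W\|_{a_{22}}^2},$$ then discretization scheme 1 is stable; that is, the discrete energy $E^{n+\frac12}$ is conserved in $n$ and satisfies $E^{n+\frac12}\ge \|(U_1^{n+1},U_2^{n+1})\|_c^2+\|(U_1^n,U_2^n)\|_c^2+\|(U_1^{n+1},U_2^n)\|_a^2+\|(U_1^n,U_2^{n+1})\|_a^2\ge0$ for all $n\ge0$.
   Context: Let $\Omega\subset\mathbb{R}^d$ be bounded, $\kappa>0$ a coefficient, $a(u,v)=\int_\Omega\kappa\nabla u\cdot\nabla v$, and $(\cdot,\cdot)$ the $L^2(\Omega)$ inner product. $V_{1,H},V_{2,H}$ are finite-dimensional spaces (in the paper $V_{j,H}=\prod_{k\in I_j}V_H$ for a coarse finite element space $V_H$ and a partition $I_1\sqcup I_2$ of the continua indices), with linear maps $T_{j,0},T_{j,1}$ on $V_{j,H}$ and $T_j=T_{j,0}+T_{j,1}$ (in the paper, $T_{j,0}U=\sum_K\mathbf{1}_K\sum_{k\in I_j}\phi_k^KU_k$, $T_{j,1}U=\sum_K\mathbf{1}_K\sum_{k\in I_j}\sum_m\phi_k^{K,m}\partial_{x_m}U_k$ with fixed multiscale basis functions). Bilinear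 forms: $m_{ij}(U,W)=(T_jU,T_iW)$, $a_{ij}(U,W)=a(T_{j,1}U,T_{i,1}W)$, $c_{ij}(U,W)=a(T_{j,0}U,T_{i,0}W)$ for $U\in V_{j,H},W\in V_{i,H}$; $\|W\|_{m_{22}}^2=m_{22}(W,W)$, $\|W\|_{a_{22}}^2=a_{22}(W,W)$; $\|(W_1,W_2)\|_x^2=\sum_{i,j=1}^2x_{ij}(W_j,W_i)$ for $x\in\{m,a,c\}$. Discretization scheme 1 (with zero source, as assumed in the paper's stability analysis), time step $\tau>0$: for $n\ge1$, for all $W_1\in V_{1,H}$, $\tfrac{1}{\tau^2} m_{11}(U_1^{n+1}-2U_1^n+U_1^{n-1},W_1)+\tfrac{1}{\tau^2} m_{12}(U_2^{n+1}-2U_2^n+U_2^{n-1},W_1)+\tfrac12 a_{11}(U_1^{n+1}+U_1^{n-1},W_1)+a_{12}(U_2^n,W_1)+\tfrac12 c_{11}(U_1^{n+1}+U_1^{n-1},W_1)+\tfrac12 c_{12}(U_2^{n+1}+U_2^{n-1},W_1)=0$, and for all $W_2\in V_{2,H}$, $\tfrac{1}{\tau^2} m_{22}(U_2^{n+1}-2U_2^n+U_2^{n-1},W_2)+\tfrac{1}{\tau^2} m_{21}(U_1^{n+1}-2U_1^n+U_1^{n-1},W_2)+a_{21}(U_1^n,W_2)+a_{22}(U_2^n,W_2)+\tfrac12 c_{21}(U_1^{n+1}+U_1^{n-1},W_2)+\tfrac12 c_{22}(U_2^{n+1}+U_2^{n-1},W_2)=0$. Discrete energy: $E^{n+\frac12}=\tfrac{2}{\tau^2}\|(U_1^{n+1}-U_1^n,U_2^{n+1}-U_2^n)\|_m^2+\|(U_1^{n+1},U_2^{n+1})\|_c^2+\|(U_1^n,U_2^n)\|_c^2+\|(U_1^{n+1},U_2^n)\|_a^2+\|(U_1^n,U_2^{n+1})\|_a^2-\|U_2^{n+1}-U_2^n\|_{a_{22}}^2$.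 The infimum is over nonzero $W$. *)

theory Defs
  imports "HOL-Analysis.Analysis"
begin

text \<open>The target function space is a real vector space 'f carrying the
  L2 inner product ip and the energy form a (both symmetric, bilinear, positive semidefinite).
  The coarse spaces V_{1,H}, V_{2,H} are finite-dimensional real spaces 'v1, 'v2, and
  T_{j,0}, T_{j,1} are linear maps into 'f.\<close>

definition sym_psd_form :: "('f::real_vector \<Rightarrow> 'f \<Rightarrow> real) \<Rightarrow> bool" where
  "sym_psd_form b \<longleftrightarrow> bilinear b \<and> (\<forall>u v. b u v = b v u) \<and> (\<forall>u. 0 \<le> b u u)"

text \<open>The pair norm: norm_x^2 (W1,W2) = sum_{i,j} x_ij(W_j,W_i), where
  x_ij(U,W) = b(S_j U, S_i W).\<close>
definition pnorm2 :: "('f \<Rightarrow> 'f \<Rightarrow> real) \<Rightarrow> ('v1 \<Rightarrow> 'f) \<Rightarrow> ('v2 \<Rightarrow> 'f) \<Rightarrow> 'v1 \<Rightarrow> 'v2 \<Rightarrow> real" where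
  "pnorm2 b S1 S2 W1 W2 =
     b (S1 W1) (S1 W1) + b (S2 W2) (S1 W1) + b (S1 W1) (S2 W2) + b (S2 W2) (S2 W2)"

definition l2norm :: "('f \<Rightarrow> 'f \<Rightarrow> real) \<Rightarrow> 'f \<Rightarrow> real" where
  "l2norm ip u = sqrt (ip u u)"

definition gamma_const :: "('f \<Rightarrow> 'f \<Rightarrow> real) \<Rightarrow> ('v1 \<Rightarrow> 'f) \<Rightarrow> ('v2 \<Rightarrow> 'f) \<Rightarrow> real" where
  "gamma_const ip T1 T2 =
     Sup {ip (T1 W1) (T2 W2) / (l2norm ip (T1 W1) * l2norm ip (T2 W2)) | W1 W2.
            l2norm ip (T1 W1) \<noteq> 0 \<and> l2norm ip (T2 W2) \<noteq> 0}"

text \<open>inf over nonzero W of norm_{m22}^2 W / norm_{a22}^2 W, in the extended reals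
  (a quotient with zero denominator and positive numerator is +infinity).\<close>
definition mass_stiff_inf :: "('f \<Rightarrow> 'f \<Rightarrow> real) \<Rightarrow> ('f \<Rightarrow> 'f \<Rightarrow> real) \<Rightarrow> ('v2::zero \<Rightarrow> 'f)
     \<Rightarrow> ('v2 \<Rightarrow> 'f) \<Rightarrow> ereal" where
  "mass_stiff_inf ip a T2 T21 =
     Inf {ereal (ip (T2 W) (T2 W)) / ereal (a (T21 W) (T21 W)) | W. W \<noteq> 0}"

text \<open>Discretization scheme 1 with zero source (equations for n >= 1).\<close>
definition scheme1 :: "('f::real_vector \<Rightarrow> 'f \<Rightarrow> real) \<Rightarrow> ('f \<Rightarrow> 'f \<Rightarrow> real)
     \<Rightarrow> ('v1::real_vector \<Rightarrow> 'f) \<Rightarrow> ('v1 \<Rightarrow> 'f) \<Rightarrow> ('v2::real_vector \<Rightarrow> 'f) \<Rightarrow> ('v2 \<Rightarrow> 'f)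
     \<Rightarrow> real \<Rightarrow> (nat \<Rightarrow> 'v1) \<Rightarrow> (nat \<Rightarrow> 'v2) \<Rightarrow> bool" where
  "scheme1 ip a T10 T11 T20 T21 \<tau> U1 U2 \<longleftrightarrow>
   (let T1 = (\<lambda>U. T10 U + T11 U); T2 = (\<lambda>U. T20 U + T21 U) in
   (\<forall>n\<ge>1. \<forall>W1.
      1 / \<tau>\<^sup>2 * ip (T1 (U1 (n+1) - 2 *\<^sub>R U1 n + U1 (n-1))) (T1 W1)
    + 1 / \<tau>\<^sup>2 * ip (T2 (U2 (n+1) - 2 *\<^sub>R U2 n + U2 (n-1))) (T1 W1)
    + 1/2 * a (T11 (U1 (n+1) + U1 (n-1))) (T11 W1)
    + a (T21 (U2 n)) (T11 W1)
    + 1/2 * a (T10 (U1 (n+1) + U1 (n-1))) (T10 W1)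
    + 1/2 * a (T20 (U2 (n+1) + U2 (n-1))) (T10 W1) = 0) \<and>
   (\<forall>n\<ge>1. \<forall>W2.
      1 / \<tau>\<^sup>2 * ip (T2 (U2 (n+1) - 2 *\<^sub>R U2 n + U2 (n-1))) (T2 W2)
    + 1 / \<tau>\<^sup>2 * ip (T1 (U1 (n+1) - 2 *\<^sub>R U1 n + U1 (n-1))) (T2 W2)
    + a (T11 (U1 n)) (T21 W2)
    + a (T21 (U2 n)) (T21 W2)
    + 1/2 * a (T10 (U1 (n+1) + U1 (n-1))) (T20 W2)
    + 1/2 * a (T20 (U2 (n+1) + U2 (n-1))) (T20 W2) = 0))"

definition energy :: "('f::real_vector \<Rightarrow> 'f \<Rightarrow> real) \<Rightarrow> ('f \<Rightarrow> 'f \<Rightarrow> real)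
     \<Rightarrow> ('v1::real_vector \<Rightarrow> 'f) \<Rightarrow> ('v1 \<Rightarrow> 'f) \<Rightarrow> ('v2::real_vector \<Rightarrow> 'f) \<Rightarrow> ('v2 \<Rightarrow> 'f)
     \<Rightarrow> real \<Rightarrow> (nat \<Rightarrow> 'v1) \<Rightarrow> (nat \<Rightarrow> 'v2) \<Rightarrow> nat \<Rightarrow> real" where
  "energy ip a T10 T11 T20 T21 \<tau> U1 U2 n =
     2 / \<tau>\<^sup>2 * pnorm2 ip (\<lambda>U. T10 U + T11 U) (\<lambda>U. T20 U + T21 U)
                   (U1 (n+1) - U1 n) (U2 (n+1) - U2 n)
   + pnorm2 a T10 T20 (U1 (n+1)) (U2 (n+1))
   + pnorm2 a T10 T20 (U1 n) (U2 n)
   + pnorm2 a T11 T21 (U1 (n+1)) (U2 n)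
   + pnorm2 a T11 T21 (U1 n) (U2 (n+1))
   - a (T21 (U2 (n+1) - U2 n)) (T21 (U2 (n+1) - U2 n))"

end

theory Submission
  imports Defs
begin

lemma symb_facts:
  assumes "sym_psd_form b"
  shows "bilinear b" "\<And>u v. b u v = b v u" "\<And>u. 0 \<le> b u u"
  using assms by (auto simp: sym_psd_form_def)

lemma mass_id:
  assumes b: "bilinear b" and s: "\<And>u v. b u v = b v u"
  shows "b (X2 - 2 *\<^sub>R X1 + X0) (X2 - X0) = b (X2 - X1) (X2 - X1) - b (X1 - X0) (X1 - X0)"
proof -
  have e: "X2 - 2 *\<^sub>R X1 + X0 = (X2 - X1) - (X1 - X0)" "X2 - X0 = (X2 - X1) + (X1 - X0)"
    by (simp_all add: algebra_simps scaleR_2)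
  have dd: "b (d - e) (d + e) = b d d - b e e" for d e
    using s[of e d] by (simp add: bilinear_ladd[OF b] bilinear_radd[OF b] bilinear_lsub[OF b] bilinear_rsub[OF b])
  show ?thesis unfolding e(1) e(2) by (rule dd)
qed

lemma c_id:
  assumes b: "bilinear b" and s: "\<And>u v. b u v = b v u"
  shows "b (Y2 + Y0) (Y2 - Y0) = b Y2 Y2 - b Y0 Y0"
  by (simp add: bilinear_ladd[OF b] bilinear_radd[OF b] bilinear_lsub[OF b] bilinear_rsub[OF b] s[of Y0 Y2])

lemma a_id:
  fixes b :: "'a::real_vector \<Rightarrow> 'a \<Rightarrow> real"
  assumes b: "bilinear b" and s: "\<And>u v. b u v = b v u"
  shows "2 * (1/2 * b (A2 + A0) (A2 - A0) + b B1 (A2 - A0) + b A1 (B2 - B0) + b B1 (B2 - B0))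
    = (b (A2 + B1) (A2 + B1) + b (A1 + B2) (A1 + B2) - b (B2 - B1) (B2 - B1))
    - (b (A1 + B0) (A1 + B0) + b (A0 + B1) (A0 + B1) - b (B1 - B0) (B1 - B0))"
  by (simp add: bilinear_ladd[OF b] bilinear_radd[OF b] bilinear_lsub[OF b] bilinear_rsub[OF b]
     s[of A1 A0] s[of A2 A0] s[of B0 A0] s[of B1 A0] s[of B2 A0] s[of A2 A1] s[of B0 A1] s[of B1 A1] s[of B2 A1] s[of B0 A2] s[of B1 A2] s[of B2 A2] s[of B1 B0] s[of B2 B0] s[of B2 B1] algebra_simps)


lemma pnorm2_eq:
  assumes b: "bilinear b"
  shows "pnorm2 b S1 S2 x y = b (S1 x + S2 y) (S1 x + S2 y)"
  unfolding pnorm2_def by (simp add: bilinear_ladd[OF b] bilinear_radd[OF b] algebra_simps)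

lemma step:
  fixes ip a :: "'f::real_vector \<Rightarrow> 'f \<Rightarrow> real"
    and T10 T11 :: "'v1::euclidean_space \<Rightarrow> 'f"
    and T20 T21 :: "'v2::euclidean_space \<Rightarrow> 'f"
  assumes ip: "sym_psd_form ip" and a: "sym_psd_form a"
    and lin: "linear T10" "linear T11" "linear T20" "linear T21"
    and scheme: "scheme1 ip a T10 T11 T20 T21 \<tau> U1 U2"
  shows "energy ip a T10 T11 T20 T21 \<tau> U1 U2 (Suc m) = energy ip a T10 T11 T20 T21 \<tau> U1 U2 m"
proof -
  note ib = symb_facts(1,2)[OF ip] and ab = symb_facts(1,2)[OF a]
  note lins = linear_add[OF lin(1)] linear_add[OF lin(2)] linear_add[OF lin(3)] linear_add[OF lin(4)]
     linear_diff[OF lin(1)] linear_diff[OF lin(2)] linear_diff[OF lin(3)] linear_diff[OF lin(4)]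
     linear_scale[OF lin(1)] linear_scale[OF lin(2)] linear_scale[OF lin(3)] linear_scale[OF lin(4)]
  define x0 where "x0 = U1 m"
  define x1 where "x1 = U1 (Suc m)"
  define x2 where "x2 = U1 (Suc (Suc m))"
  define y0 where "y0 = U2 m"
  define y1 where "y1 = U2 (Suc m)"
  define y2 where "y2 = U2 (Suc (Suc m))"
  define T1 where "T1 = (\<lambda>U. T10 U + T11 U)"
  define T2 where "T2 = (\<lambda>U. T20 U + T21 U)"
  define X where "X = (\<lambda>x y. T1 x + T2 y)"
  define Y where "Y = (\<lambda>x y. T10 x + T20 y)"
  define q where "q = 1 / \<tau>\<^sup>2"
  note S = scheme[unfolded scheme1_def Let_def]
  have e1: "q * ip (T1 (x2 - 2 *\<^sub>R x1 + x0)) (T1 (x2 - x0))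
    + q * ip (T2 (y2 - 2 *\<^sub>R y1 + y0)) (T1 (x2 - x0))
    + 1/2 * a (T11 (x2 + x0)) (T11 (x2 - x0))
    + a (T21 y1) (T11 (x2 - x0))
    + 1/2 * a (T10 (x2 + x0)) (T10 (x2 - x0))
    + 1/2 * a (T20 (y2 + y0)) (T10 (x2 - x0)) = 0"
    using conjunct1[OF S, rule_format, of "Suc m" "x2 - x0"]
    unfolding T1_def T2_def x0_def x1_def x2_def y0_def y1_def y2_def q_def by simp
  have e2: "q * ip (T2 (y2 - 2 *\<^sub>R y1 + y0)) (T2 (y2 - y0))
    + q * ip (T1 (x2 - 2 *\<^sub>R x1 + x0)) (T2 (y2 - y0))
    + a (T11 x1) (T21 (y2 - y0))
    + a (T21 y1) (T21 (y2 - y0))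
    + 1/2 * a (T10 (x2 + x0)) (T20 (y2 - y0))
    + 1/2 * a (T20 (y2 + y0)) (T20 (y2 - y0)) = 0"
    using conjunct2[OF S, rule_format, of "Suc m" "y2 - y0"]
    unfolding T1_def T2_def x0_def x1_def x2_def y0_def y1_def y2_def q_def by simp
  have linT1: "linear T1" unfolding T1_def using lin(1,2) by (rule linear_compose_add)
  have linT2: "linear T2" unfolding T2_def using lin(3,4) by (rule linear_compose_add)
  have m1: "ip (T1 (x2 - 2 *\<^sub>R x1 + x0)) (T1 (x2 - x0)) + ip (T2 (y2 - 2 *\<^sub>R y1 + y0)) (T1 (x2 - x0))
      + ip (T2 (y2 - 2 *\<^sub>R y1 + y0)) (T2 (y2 - y0)) + ip (T1 (x2 - 2 *\<^sub>R x1 + x0)) (T2 (y2 - y0))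
      = ip (X x2 y2 - 2 *\<^sub>R X x1 y1 + X x0 y0) (X x2 y2 - X x0 y0)"
  proof -
    have "X x2 y2 - 2 *\<^sub>R X x1 y1 + X x0 y0 = T1 (x2 - 2 *\<^sub>R x1 + x0) + T2 (y2 - 2 *\<^sub>R y1 + y0)"
      unfolding X_def using linT1 linT2
      by (simp add: linear_add linear_diff linear_scale algebra_simps)
    moreover have "X x2 y2 - X x0 y0 = T1 (x2 - x0) + T2 (y2 - y0)"
      unfolding X_def using linT1 linT2
      by (simp add: linear_add linear_diff linear_scale algebra_simps)
    ultimately show ?thesis
      by (simp add: bilinear_ladd[OF ib(1)] bilinear_radd[OF ib(1)])
  qed
  have m2: "ip (X x2 y2 - 2 *\<^sub>R X x1 y1 + X x0 y0) (X x2 y2 - X x0 y0)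
     = ip (X x2 y2 - X x1 y1) (X x2 y2 - X x1 y1) - ip (X x1 y1 - X x0 y0) (X x1 y1 - X x0 y0)"
    by (rule mass_id[OF ib])
  have c1: "a (T10 (x2 + x0)) (T10 (x2 - x0)) + a (T20 (y2 + y0)) (T10 (x2 - x0))
      + a (T10 (x2 + x0)) (T20 (y2 - y0)) + a (T20 (y2 + y0)) (T20 (y2 - y0))
      = a (Y x2 y2 + Y x0 y0) (Y x2 y2 - Y x0 y0)"
  proof -
    have "Y x2 y2 + Y x0 y0 = T10 (x2 + x0) + T20 (y2 + y0)"
      unfolding Y_def by (simp add: lins algebra_simps)
    moreover have "Y x2 y2 - Y x0 y0 = T10 (x2 - x0) + T20 (y2 - y0)"
      unfolding Y_def by (simp add: lins algebra_simps)
    ultimately show ?thesis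
      by (simp add: bilinear_ladd[OF ab(1)] bilinear_radd[OF ab(1)])
  qed
  have c2: "a (Y x2 y2 + Y x0 y0) (Y x2 y2 - Y x0 y0) = a (Y x2 y2) (Y x2 y2) - a (Y x0 y0) (Y x0 y0)"
    by (rule c_id[OF ab])
  have a1: "2 * (1/2 * a (T11 (x2 + x0)) (T11 (x2 - x0)) + a (T21 y1) (T11 (x2 - x0))
      + a (T11 x1) (T21 (y2 - y0)) + a (T21 y1) (T21 (y2 - y0)))
    = (a (T11 x2 + T21 y1) (T11 x2 + T21 y1) + a (T11 x1 + T21 y2) (T11 x1 + T21 y2)
        - a (T21 (y2 - y1)) (T21 (y2 - y1)))
    - (a (T11 x1 + T21 y0) (T11 x1 + T21 y0) + a (T11 x0 + T21 y1) (T11 x0 + T21 y1)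
        - a (T21 (y1 - y0)) (T21 (y1 - y0)))"
    using a_id[OF ab, of "T11 x2" "T11 x0" "T21 y1" "T11 x1" "T21 y2" "T21 y0"]
    by (simp add: lins)
  have en1: "energy ip a T10 T11 T20 T21 \<tau> U1 U2 (Suc m) =
     2 * q * ip (X x2 y2 - X x1 y1) (X x2 y2 - X x1 y1) + a (Y x2 y2) (Y x2 y2) + a (Y x1 y1) (Y x1 y1)
     + a (T11 x2 + T21 y1) (T11 x2 + T21 y1) + a (T11 x1 + T21 y2) (T11 x1 + T21 y2)
     - a (T21 (y2 - y1)) (T21 (y2 - y1))"
  proof -
    have "X x2 y2 - X x1 y1 = T1 (x2 - x1) + T2 (y2 - y1)"
      unfolding X_def using linT1 linT2
      by (simp add: linear_add linear_diff linear_scale algebra_simps)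
    then show ?thesis
      unfolding energy_def pnorm2_eq[OF ib(1)] pnorm2_eq[OF ab(1)]
      by (simp add: T1_def T2_def Y_def q_def x0_def x1_def x2_def y0_def y1_def y2_def)
  qed
  have en0: "energy ip a T10 T11 T20 T21 \<tau> U1 U2 m =
     2 * q * ip (X x1 y1 - X x0 y0) (X x1 y1 - X x0 y0) + a (Y x1 y1) (Y x1 y1) + a (Y x0 y0) (Y x0 y0)
     + a (T11 x1 + T21 y0) (T11 x1 + T21 y0) + a (T11 x0 + T21 y1) (T11 x0 + T21 y1)
     - a (T21 (y1 - y0)) (T21 (y1 - y0))"
  proof -
    have "X x1 y1 - X x0 y0 = T1 (x1 - x0) + T2 (y1 - y0)"
      unfolding X_def using linT1 linT2
      by (simp add: linear_add linear_diff linear_scale algebra_simps)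
    then show ?thesis
      unfolding energy_def pnorm2_eq[OF ib(1)] pnorm2_eq[OF ab(1)]
      by (simp add: T1_def T2_def Y_def q_def x0_def x1_def x2_def y0_def y1_def y2_def)
  qed
  have "q * (ip (X x2 y2 - X x1 y1) (X x2 y2 - X x1 y1) - ip (X x1 y1 - X x0 y0) (X x1 y1 - X x0 y0))
     = q * ip (T1 (x2 - 2 *\<^sub>R x1 + x0)) (T1 (x2 - x0)) + q * ip (T2 (y2 - 2 *\<^sub>R y1 + y0)) (T1 (x2 - x0))
      + q * ip (T2 (y2 - 2 *\<^sub>R y1 + y0)) (T2 (y2 - y0)) + q * ip (T1 (x2 - 2 *\<^sub>R x1 + x0)) (T2 (y2 - y0))"
    unfolding m2[symmetric] m1[symmetric] by (simp add: algebra_simps)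
  then show ?thesis unfolding en1 en0 using e1 e2 c1 c2 a1 by (simp add: algebra_simps)
qed


lemma cs:
  assumes "sym_psd_form b"
  shows "(b u v)\<^sup>2 \<le> b u u * b v v"
proof -
  note bb = symb_facts[OF assms]
  have ex: "b (u - t *\<^sub>R v) (u - t *\<^sub>R v) = b u u - 2 * t * b u v + t\<^sup>2 * b v v" for t
    by (simp add: bilinear_lsub[OF bb(1)] bilinear_rsub[OF bb(1)] bilinear_lmul[OF bb(1)]
        bilinear_rmul[OF bb(1)] bb(2)[of v u] power2_eq_square algebra_simps)
  have nn: "0 \<le> b u u - 2 * t * b u v + t\<^sup>2 * b v v" for t
    using bb(3)[of "u - t *\<^sub>R v"] ex[of t] by simp
  show ?thesis
  proof (cases "b v v = 0")
    case True
    have "b u v = 0"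
    proof (rule ccontr)
      assume h: "b u v \<noteq> 0"
      have "0 \<le> b u u - 2 * ((b u u + 1) / (2 * b u v)) * b u v"
        using nn[of "(b u u + 1) / (2 * b u v)"] True by simp
      also have "\<dots> = -1" using h by (simp add: field_simps)
      finally show False by simp
    qed
    then show ?thesis using True by simp
  next
    case False
    then have pos: "b v v > 0" using bb(3)[of v] by simp
    have "0 \<le> b u u - 2 * (b u v / b v v) * b u v + (b u v / b v v)\<^sup>2 * b v v"
      by (rule nn)
    also have "\<dots> = b u u - (b u v)\<^sup>2 / b v v"
      using pos by (simp add: field_simps power2_eq_square)
    finally have "(b u v)\<^sup>2 / b v v \<le> b u u" by simp
    then show ?thesis using pos by (simp add: field_simps mult.commute)
  qed
qed

lemma cs_abs:
  assumes "sym_psd_form b"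
  shows "\<bar>b u v\<bar> \<le> sqrt (b u u) * sqrt (b v v)"
proof -
  have "\<bar>b u v\<bar> = sqrt ((b u v)\<^sup>2)" by simp
  also have "\<dots> \<le> sqrt (b u u * b v v)" using cs[OF assms] by (rule real_sqrt_le_mono)
  also have "\<dots> = sqrt (b u u) * sqrt (b v v)" by (simp add: real_sqrt_mult)
  finally show ?thesis .
qed

lemma gamma_bound:
  fixes ip :: "'f::real_vector \<Rightarrow> 'f \<Rightarrow> real"
  assumes ip: "sym_psd_form ip" and l1: "linear T1" and l2: "linear T2"
    and g: "0 < gamma_const ip T1 T2" "gamma_const ip T1 T2 < 1"
  shows "ip (T1 x + T2 y) (T1 x + T2 y) \<ge> (1 - (gamma_const ip T1 T2)\<^sup>2) * ip (T2 y) (T2 y)"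
proof -
  note bb = symb_facts[OF ip]
  let ?g = "gamma_const ip T1 T2"
  let ?S = "{ip (T1 W1) (T2 W2) / (l2norm ip (T1 W1) * l2norm ip (T2 W2)) | W1 W2.
            l2norm ip (T1 W1) \<noteq> 0 \<and> l2norm ip (T2 W2) \<noteq> 0}"
  have bdd: "bdd_above ?S"
  proof (rule bdd_aboveI[where M=1], clarify)
    fix W1 W2 assume h: "l2norm ip (T1 W1) \<noteq> 0" "l2norm ip (T2 W2) \<noteq> 0"
    have "ip (T1 W1) (T1 W1) > 0" "ip (T2 W2) (T2 W2) > 0"
      using h bb(3) by (auto simp: l2norm_def order_less_le)
    then have p: "l2norm ip (T1 W1) * l2norm ip (T2 W2) > 0"
      by (simp add: l2norm_def)
    have "ip (T1 W1) (T2 W2) \<le> l2norm ip (T1 W1) * l2norm ip (T2 W2)"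
      using cs_abs[OF ip, of "T1 W1" "T2 W2"] by (simp add: l2norm_def)
    then show "ip (T1 W1) (T2 W2) / (l2norm ip (T1 W1) * l2norm ip (T2 W2)) \<le> 1"
      using p by simp
  qed
  define u where "u = T1 x"
  define v where "v = T2 y"
  define p where "p = sqrt (ip u u)"
  define q where "q = sqrt (ip v v)"
  have p0: "p \<ge> 0" and q0: "q \<ge> 0" using bb(3)[of u] bb(3)[of v] by (simp_all add: p_def q_def)
  have pp: "ip u u = p\<^sup>2" and qq: "ip v v = q\<^sup>2" using bb(3)[of u] bb(3)[of v] by (simp_all add: p_def q_def)
  have key: "ip u v \<ge> - ?g * p * q"
  proof (cases "p = 0 \<or> q = 0")
    case True
    then have "ip u v = 0" using cs_abs[OF ip, of u v] by (auto simp: p_def q_def)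
    then show ?thesis using True by auto
  next
    case False
    have "l2norm ip (T1 (-x)) \<noteq> 0" "l2norm ip (T2 y) \<noteq> 0"
      using False by (simp_all add: l2norm_def linear_neg[OF l1] bilinear_lneg[OF bb(1)]
          bilinear_rneg[OF bb(1)] p_def q_def u_def v_def)
    then have "ip (T1 (-x)) (T2 y) / (l2norm ip (T1 (-x)) * l2norm ip (T2 y)) \<in> ?S"
      by blast
    then have "ip (T1 (-x)) (T2 y) / (l2norm ip (T1 (-x)) * l2norm ip (T2 y)) \<le> ?g"
      unfolding gamma_const_def using bdd by (rule cSup_upper)
    then have "- ip u v / (p * q) \<le> ?g"
      by (simp add: l2norm_def linear_neg[OF l1] bilinear_lneg[OF bb(1)] bilinear_rneg[OF bb(1)] p_def q_def u_def v_def)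
    moreover have "p * q > 0" using False p0 q0 by simp
    ultimately have "- ip u v \<le> ?g * (p * q)" by (metis minus_divide_left pos_divide_le_eq)
    then show ?thesis by (simp add: algebra_simps)
  qed
  have A: "ip (u + v) (u + v) = p\<^sup>2 + 2 * ip u v + q\<^sup>2"
    using pp qq by (simp add: bilinear_ladd[OF bb(1)] bilinear_radd[OF bb(1)] bb(2)[of v u])
  have B: "p\<^sup>2 + 2 * ip u v + q\<^sup>2 \<ge> p\<^sup>2 - 2 * (?g * p * q) + q\<^sup>2" using key by linarith
  have C: "p\<^sup>2 - 2 * (?g * p * q) + q\<^sup>2 = (p - ?g * q)\<^sup>2 + (1 - ?g\<^sup>2) * q\<^sup>2"
    by (simp add: power2_eq_square algebra_simps)
  have D: "(p - ?g * q)\<^sup>2 \<ge> 0" by simp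
  from A B C D have "ip (u + v) (u + v) \<ge> (1 - ?g\<^sup>2) * q\<^sup>2" by linarith
  then show ?thesis using qq by (simp add: u_def v_def)
qed

lemma cfl_bound:
  fixes ip a :: "'f::real_vector \<Rightarrow> 'f \<Rightarrow> real" and T21 :: "'v2::real_vector \<Rightarrow> 'f"
  assumes ip: "sym_psd_form ip" and a: "sym_psd_form a" and l: "linear T21"
    and c: "0 \<le> c"
    and cfl: "ereal (\<tau>\<^sup>2) \<le> ereal c * mass_stiff_inf ip a T2 T21"
  shows "\<tau>\<^sup>2 * a (T21 y) (T21 y) \<le> c * ip (T2 y) (T2 y)"
proof (cases "a (T21 y) (T21 y) = 0")
  case True
  then show ?thesis using c symb_facts(3)[OF ip] by simp
next
  case False
  define s where "s = a (T21 y) (T21 y)"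
  have s: "s > 0" using False symb_facts(3)[OF a] by (simp add: s_def order_less_le)
  have "y \<noteq> 0" using False linear_0[OF l] bilinear_lzero[OF symb_facts(1)[OF a]] by auto
  then have "mass_stiff_inf ip a T2 T21 \<le> ereal (ip (T2 y) (T2 y)) / ereal s"
    unfolding mass_stiff_inf_def s_def by (intro Inf_lower) blast
  also have "\<dots> = ereal (ip (T2 y) (T2 y) / s)" using s by simp
  finally have "ereal c * mass_stiff_inf ip a T2 T21 \<le> ereal c * ereal (ip (T2 y) (T2 y) / s)"
    using c by (intro ereal_mult_left_mono) auto
  from order_trans[OF cfl this]
  have "ereal (\<tau>\<^sup>2) \<le> ereal c * ereal (ip (T2 y) (T2 y) / s)" .
  then have "\<tau>\<^sup>2 \<le> c * (ip (T2 y) (T2 y) / s)" by (metis ereal_less_eq(3) times_ereal.simps(1))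
  then show ?thesis using s by (simp add: s_def field_simps)
qed

theorem theorem2:
  fixes ip a :: "'f::real_vector \<Rightarrow> 'f \<Rightarrow> real"
    and T10 T11 :: "'v1::euclidean_space \<Rightarrow> 'f"
    and T20 T21 :: "'v2::euclidean_space \<Rightarrow> 'f"
    and \<tau> :: real
    and U1 :: "nat \<Rightarrow> 'v1" and U2 :: "nat \<Rightarrow> 'v2"
  defines "T1 \<equiv> (\<lambda>U. T10 U + T11 U)" and "T2 \<equiv> (\<lambda>U. T20 U + T21 U)"
  defines "\<gamma> \<equiv> gamma_const ip T1 T2"
  assumes ip: "sym_psd_form ip" and a: "sym_psd_form a"
    and lin: "linear T10" "linear T11" "linear T20" "linear T21"
    and gamma: "0 < \<gamma>" "\<gamma> < 1"
    and tau: "0 < \<tau>"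
    and cfl: "ereal (\<tau>\<^sup>2) \<le> ereal (2 * (1 - \<gamma>\<^sup>2)) * mass_stiff_inf ip a T2 T21"
    and scheme: "scheme1 ip a T10 T11 T20 T21 \<tau> U1 U2"
  shows "\<forall>n. energy ip a T10 T11 T20 T21 \<tau> U1 U2 n = energy ip a T10 T11 T20 T21 \<tau> U1 U2 0
           \<and> energy ip a T10 T11 T20 T21 \<tau> U1 U2 n \<ge>
               pnorm2 a T10 T20 (U1 (n+1)) (U2 (n+1)) + pnorm2 a T10 T20 (U1 n) (U2 n)
             + pnorm2 a T11 T21 (U1 (n+1)) (U2 n) + pnorm2 a T11 T21 (U1 n) (U2 (n+1))
           \<and> pnorm2 a T10 T20 (U1 (n+1)) (U2 (n+1)) + pnorm2 a T10 T20 (U1 n) (U2 n)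
             + pnorm2 a T11 T21 (U1 (n+1)) (U2 n) + pnorm2 a T11 T21 (U1 n) (U2 (n+1)) \<ge> 0"
proof (intro allI conjI)
  fix n
  note ib = symb_facts[OF ip] and ab = symb_facts[OF a]
  have linT1: "linear T1" unfolding T1_def using lin(1,2) by (rule linear_compose_add)
  have linT2: "linear T2" unfolding T2_def using lin(3,4) by (rule linear_compose_add)
  show "energy ip a T10 T11 T20 T21 \<tau> U1 U2 n = energy ip a T10 T11 T20 T21 \<tau> U1 U2 0"
  proof (induction n)
    case 0 then show ?case by simp
  next
    case (Suc n) then show ?case using step[OF ip a lin scheme, of n] by simp
  qed
  show "pnorm2 a T10 T20 (U1 (n+1)) (U2 (n+1)) + pnorm2 a T10 T20 (U1 n) (U2 n)
             + pnorm2 a T11 T21 (U1 (n+1)) (U2 n) + pnorm2 a T11 T21 (U1 n) (U2 (n+1)) \<ge> 0"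
    unfolding pnorm2_eq[OF ab(1)] using ab(3) by (simp add: add_nonneg_nonneg)
  define dx where "dx = U1 (n+1) - U1 n"
  define dy where "dy = U2 (n+1) - U2 n"
  have g: "ip (T1 dx + T2 dy) (T1 dx + T2 dy) \<ge> (1 - \<gamma>\<^sup>2) * ip (T2 dy) (T2 dy)"
    unfolding \<gamma>_def using gamma_bound[OF ip linT1 linT2] gamma unfolding \<gamma>_def by blast
  have cf: "\<tau>\<^sup>2 * a (T21 dy) (T21 dy) \<le> 2 * (1 - \<gamma>\<^sup>2) * ip (T2 dy) (T2 dy)"
  proof (rule cfl_bound[OF ip a lin(4) _ cfl])
    have "\<gamma>\<^sup>2 < 1" using gamma by (simp add: power_less_one_iff)
    then show "0 \<le> 2 * (1 - \<gamma>\<^sup>2)" by simp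
  qed
  have t2: "\<tau>\<^sup>2 > 0" using tau by simp
  have "a (T21 dy) (T21 dy) \<le> 2 / \<tau>\<^sup>2 * ((1 - \<gamma>\<^sup>2) * ip (T2 dy) (T2 dy))"
    using cf t2 by (simp add: field_simps)
  also have "\<dots> \<le> 2 / \<tau>\<^sup>2 * ip (T1 dx + T2 dy) (T1 dx + T2 dy)"
    using g t2 by (intro mult_left_mono) auto
  finally have fin: "a (T21 dy) (T21 dy) \<le> 2 / \<tau>\<^sup>2 * pnorm2 ip T1 T2 dx dy"
    unfolding pnorm2_eq[OF ib(1)] .
  show "energy ip a T10 T11 T20 T21 \<tau> U1 U2 n \<ge>
               pnorm2 a T10 T20 (U1 (n+1)) (U2 (n+1)) + pnorm2 a T10 T20 (U1 n) (U2 n)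
             + pnorm2 a T11 T21 (U1 (n+1)) (U2 n) + pnorm2 a T11 T21 (U1 n) (U2 (n+1))"
    using fin unfolding energy_def T1_def[symmetric] T2_def[symmetric] dx_def dy_def by simp
qed


end
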